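(* For every real $\kappa>\frac56$ there exists a doubly stochastic $2\times 2$ matrix $\mathcal M_\kappa$ such that no directed $3$-regular multigraph $G$ on $[2]$ has throughput at least $\kappa$ with respect to $\mathcal M_\kappa$ (i.e., no such $G$ hosts $\kappa\mathcal M_\kappa$).
   Context: Let $n\ge 1$ and $[n]=\{1,\dots,n\}$. Networks are finite directed multigraphs on vertex set $[n]$; self-loops and parallel arcs are allowed. A directed multigraph is directed $r$-regular if every vertex has exactly $r$ outgoing and exactly $r$ incoming arcs (a self-loop at $v$ counts as one outgoing and one incoming arc of $v$). A path is a non-empty sequence of arcs $((u_1,v_1),\dots,(u_\ell,v_\ell))$ with $v_i=u_{i+1}$ for $i<\ell$; it goes from $u_1$ to $v_\ell$ and has length $\ell\ge 1$. An $n\times n$ matrix is doubly stochastic if all entries are nonnegative and every row and every column sums to $1$. In a directed $(2n-1)$-regular multigraph $G$ on $[n]$ every arc has capacity $\frac{1}{2n-1}$. $G$ hosts a nonnegative $n\times n$ matrix $\mathcal M=(a_{i,j})$ if there is a finite collection $\{(P_k,d_k)\}$, where each $P_k$ is a path in $G$ from some $s_k$ to some $t_k$ and $d_k\ge 0$, such that $\sum_{k:\,s_k=u,\,t_k=v} d_k=a_{u,v}$ for all $u,v\in[n]$, and for every arc $e$ of $G$ (parallel arcs are distinct) $\sum_{k:\,e\in P_k} d_k\le \frac{1}{2n-1}$. The throughput of $G$ with respect to a doubly stochastic $\mathcal M$ is the largest $\theta$ such that $G$ hosts $\theta\mathcal M$. *)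

theory Defs
  imports Main "HOL.Real"
begin

text \<open>A directed multigraph on vertex set [n] = {1..n} is given by a list of arcs;
  arc number i (for i < length arcs) is the pair arcs ! i = (tail, head).
  Parallel arcs and self-loops are allowed; arcs are identified by their index,
  so parallel arcs are distinct.\<close>

definition multigraph_on :: "nat \<Rightarrow> (nat \<times> nat) list \<Rightarrow> bool" where
  "multigraph_on n arcs \<longleftrightarrow> (\<forall>(u, v) \<in> set arcs. u \<in> {1..n} \<and> v \<in> {1..n})"

definition directed_regular :: "nat \<Rightarrow> nat \<Rightarrow> (nat \<times> nat) list \<Rightarrow> bool" where
  "directed_regular n r arcs \<longleftrightarrow> multigraph_on n arcs \<and>
     (\<forall>v \<in> {1..n}. card {i. i < length arcs \<and> fst (arcs ! i) = v} = r
                  \<and> card {i. i < length arcs \<and> snd (arcs ! i) = v} = r)"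

definition is_path :: "(nat \<times> nat) list \<Rightarrow> nat list \<Rightarrow> bool" where
  "is_path arcs P \<longleftrightarrow> P \<noteq> [] \<and> (\<forall>e \<in> set P. e < length arcs) \<and>
     (\<forall>i. Suc i < length P \<longrightarrow> snd (arcs ! (P ! i)) = fst (arcs ! (P ! Suc i)))"

definition path_src :: "(nat \<times> nat) list \<Rightarrow> nat list \<Rightarrow> nat" where
  "path_src arcs P = fst (arcs ! hd P)"

definition path_tgt :: "(nat \<times> nat) list \<Rightarrow> nat list \<Rightarrow> nat" where
  "path_tgt arcs P = snd (arcs ! last P)"

text \<open>n x n matrices are functions nat => nat => real, read on indices in {1..n}.\<close>

definition doubly_stochastic :: "nat \<Rightarrow> (nat \<Rightarrow> nat \<Rightarrow> real) \<Rightarrow> bool" where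
  "doubly_stochastic n M \<longleftrightarrow>
     (\<forall>i \<in> {1..n}. \<forall>j \<in> {1..n}. M i j \<ge> 0) \<and>
     (\<forall>i \<in> {1..n}. (\<Sum>j = 1..n. M i j) = 1) \<and>
     (\<forall>j \<in> {1..n}. (\<Sum>i = 1..n. M i j) = 1)"

definition hosts :: "nat \<Rightarrow> (nat \<times> nat) list \<Rightarrow> (nat \<Rightarrow> nat \<Rightarrow> real) \<Rightarrow> bool" where
  "hosts n arcs a \<longleftrightarrow> (\<exists>F :: (nat list \<times> real) list.
     (\<forall>k < length F. is_path arcs (fst (F ! k)) \<and> snd (F ! k) \<ge> 0) \<and>
     (\<forall>u \<in> {1..n}. \<forall>v \<in> {1..n}.
        (\<Sum>k \<in> {k. k < length F \<and> path_src arcs (fst (F ! k)) = u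
                              \<and> path_tgt arcs (fst (F ! k)) = v}. snd (F ! k)) = a u v) \<and>
     (\<forall>e < length arcs.
        (\<Sum>k \<in> {k. k < length F \<and> e \<in> set (fst (F ! k))}. snd (F ! k))
          \<le> 1 / (2 * real n - 1)))"

end

theory Submission
  imports Defs
begin

lemma arc_vals:
  assumes "multigraph_on 2 arcs" "e < length arcs"
  shows "fst (arcs ! e) \<in> {1,2} \<and> snd (arcs ! e) \<in> {1,2}"
proof -
  have "arcs ! e \<in> set arcs" using assms(2) by simp
  then show ?thesis using assms(1) unfolding multigraph_on_def by fastforce
qed

lemma cross12:
  assumes mg: "multigraph_on 2 arcs" and p: "is_path arcs P"
    and s: "fst (arcs ! hd P) = 1" and t: "snd (arcs ! last P) = 2"
  shows "\<exists>e\<in>set P. arcs ! e = (1,2)"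
proof -
  have ne: "P \<noteq> []" and lt: "\<forall>e\<in>set P. e < length arcs"
    and cons: "\<forall>i. Suc i < length P \<longrightarrow> snd (arcs ! (P ! i)) = fst (arcs ! (P ! Suc i))"
    using p unfolding is_path_def by auto
  define Q where "Q = (\<lambda>i. i < length P \<and> snd (arcs ! (P ! i)) = 2)"
  have "Q (length P - 1)" using ne t unfolding Q_def by (simp add: last_conv_nth)
  hence Qi: "Q (LEAST i. Q i)" by (rule LeastI)
  define i0 where "i0 = (LEAST i. Q i)"
  have Q0: "Q i0" using Qi i0_def by simp
  have mem: "P ! i0 \<in> set P" using Q0 unfolding Q_def by simp
  have vals: "fst (arcs ! (P ! i0)) \<in> {1,2} \<and> snd (arcs ! (P ! i0)) \<in> {1,2}"
    using arc_vals[OF mg] lt mem by blast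
  have "fst (arcs ! (P ! i0)) = 1"
  proof (cases i0)
    case 0
    then show ?thesis using s ne by (simp add: hd_conv_nth)
  next
    case (Suc j)
    have "\<not> Q j" using not_less_Least[of j Q] Suc i0_def by simp
    moreover have jl: "j < length P" using Q0 Suc unfolding Q_def by simp
    ultimately have "snd (arcs ! (P ! j)) \<noteq> 2" unfolding Q_def by simp
    moreover have "snd (arcs ! (P ! j)) \<in> {1,2}" using arc_vals[OF mg] lt jl by simp
    moreover have "snd (arcs ! (P ! j)) = fst (arcs ! (P ! i0))"
      using cons Suc Q0 unfolding Q_def by simp
    ultimately show ?thesis by auto
  qed
  moreover have "snd (arcs ! (P ! i0)) = 2" using Q0 unfolding Q_def by simp
  ultimately have "arcs ! (P ! i0) = (1,2)" by (simp add: prod_eq_iff)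
  then show ?thesis using mem by blast
qed

lemma double_count:
  fixes w :: "nat \<Rightarrow> real"
  assumes fE: "finite E" and nn: "\<forall>k<m. w k \<ge> 0" and K: "K \<subseteq> {..<m}"
    and meet: "\<forall>k\<in>K. \<exists>e\<in>E. e \<in> set (P k)"
  shows "(\<Sum>k\<in>K. w k) \<le> (\<Sum>e\<in>E. \<Sum>k\<in>{k. k < m \<and> e \<in> set (P k)}. w k)"
proof -
  have eq: "(\<Sum>k\<in>{k. k < m \<and> e \<in> set (P k)}. w k) = (\<Sum>k<m. if e \<in> set (P k) then w k else 0)" for e
    by (simp add: sum.inter_filter[symmetric] lessThan_def)
  have "(\<Sum>k\<in>K. w k) \<le> (\<Sum>k\<in>K. \<Sum>e\<in>E. if e \<in> set (P k) then w k else 0)"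
  proof (rule sum_mono)
    fix k assume kK: "k \<in> K"
    then obtain e where e: "e \<in> E" "e \<in> set (P k)" using meet by blast
    have wk: "w k \<ge> 0" using nn K kK by auto
    have "w k = (if e \<in> set (P k) then w k else 0)" using e by simp
    also have "\<dots> \<le> (\<Sum>e\<in>E. if e \<in> set (P k) then w k else 0)"
      by (rule member_le_sum[OF e(1)]) (use wk fE in auto)
    finally show "w k \<le> (\<Sum>e\<in>E. if e \<in> set (P k) then w k else 0)" .
  qed
  also have "\<dots> \<le> (\<Sum>k<m. \<Sum>e\<in>E. if e \<in> set (P k) then w k else 0)"
    by (rule sum_mono2[OF _ K]) (use nn in \<open>auto intro!: sum_nonneg\<close>)
  also have "\<dots> = (\<Sum>e\<in>E. \<Sum>k<m. if e \<in> set (P k) then w k else 0)"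
    by (rule sum.swap)
  also have "\<dots> = (\<Sum>e\<in>E. \<Sum>k\<in>{k. k < m \<and> e \<in> set (P k)}. w k)"
    using eq by simp
  finally show ?thesis .
qed

theorem proposition3p4:
  fixes \<kappa> :: real
  assumes "\<kappa> > 5 / 6"
  shows "\<exists>M. doubly_stochastic 2 M \<and>
           \<not> (\<exists>arcs. directed_regular 2 3 arcs \<and> hosts 2 arcs (\<lambda>i j. \<kappa> * M i j))"
proof -
  define M :: "nat \<Rightarrow> nat \<Rightarrow> real" where "M = (\<lambda>i j. if i = j then 3/5 else 2/5)"
  have ds: "doubly_stochastic 2 M"
    unfolding doubly_stochastic_def M_def by (auto simp: numeral_2_eq_2)
  have no: "\<not> (directed_regular 2 3 arcs \<and> hosts 2 arcs (\<lambda>i j. \<kappa> * M i j))" for arcs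
  proof
    assume A: "directed_regular 2 3 arcs \<and> hosts 2 arcs (\<lambda>i j. \<kappa> * M i j)"
    define N where "N = length arcs"
    have mg: "multigraph_on 2 arcs" using A unfolding directed_regular_def by simp
    have deg1: "card {i. i < N \<and> fst (arcs ! i) = 1} = 3"
      and deg2: "card {i. i < N \<and> snd (arcs ! i) = 2} = 3"
      using A unfolding directed_regular_def N_def by auto
    obtain F :: "(nat list \<times> real) list" where
      F1: "\<forall>k < length F. is_path arcs (fst (F ! k)) \<and> snd (F ! k) \<ge> 0" and
      F2: "\<forall>u \<in> {1..2}. \<forall>v \<in> {1..2}.
        (\<Sum>k \<in> {k. k < length F \<and> path_src arcs (fst (F ! k)) = u
                              \<and> path_tgt arcs (fst (F ! k)) = v}. snd (F ! k)) = \<kappa> * M u v" and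
      F3: "\<forall>e < length arcs.
        (\<Sum>k \<in> {k. k < length F \<and> e \<in> set (fst (F ! k))}. snd (F ! k))
          \<le> 1 / (2 * real 2 - 1)"
      using A unfolding hosts_def by blast
    define m where "m = length F"
    define P where "P = (\<lambda>k. fst (F ! k))"
    define w where "w = (\<lambda>k. snd (F ! k))"
    define load where "load = (\<lambda>e. \<Sum>k \<in> {k. k < m \<and> e \<in> set (P k)}. w k)"
    have nn: "\<forall>k<m. w k \<ge> 0" using F1 unfolding m_def w_def by auto
    have pth: "is_path arcs (P k)" if "k < m" for k using F1 that unfolding m_def P_def by auto
    have ld: "load e \<le> 1/3" if "e < N" for e
      using F3 that unfolding load_def N_def m_def P_def w_def by auto
    define K where "K = (\<lambda>u v. {k. k < m \<and> path_src arcs (P k) = u \<and> path_tgt arcs (P k) = v})"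
    have dem: "(\<Sum>k\<in>K u v. w k) = \<kappa> * M u v" if "u \<in> {1,2}" "v \<in> {1,2}" for u v
      using F2 that unfolding K_def m_def P_def w_def by auto
    define Ed where "Ed = (\<lambda>a b. {e. e < N \<and> arcs ! e = (a, b)})"
    have finEd: "finite (Ed a b)" for a b unfolding Ed_def by simp
    have Ed_sub: "Ed a b \<subseteq> {..<N}" for a b unfolding Ed_def by auto
    have cap: "(\<Sum>e\<in>Ed a b. load e) \<le> real (card (Ed a b)) / 3" for a b
    proof -
      have "(\<Sum>e\<in>Ed a b. load e) \<le> (\<Sum>e\<in>Ed a b. 1/3)"
        by (rule sum_mono) (use ld Ed_sub in auto)
      then show ?thesis by simp
    qed
    have av: "fst (arcs ! e) \<in> {1,2} \<and> snd (arcs ! e) \<in> {1,2}" if "e < N" for e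
      using arc_vals[OF mg] that N_def by simp
    have u1: "{i. i < N \<and> fst (arcs ! i) = 1} = Ed 1 1 \<union> Ed 1 2"
      unfolding Ed_def using av by (auto simp: prod_eq_iff)
    have u2: "{i. i < N \<and> snd (arcs ! i) = 2} = Ed 1 2 \<union> Ed 2 2"
      unfolding Ed_def using av by (auto simp: prod_eq_iff)
    have c1: "card (Ed 1 1) + card (Ed 1 2) = 3"
      using deg1 unfolding u1 by (subst card_Un_disjoint[symmetric]) (auto simp: finEd Ed_def)
    have c2: "card (Ed 1 2) + card (Ed 2 2) = 3"
      using deg2 unfolding u2 by (subst card_Un_disjoint[symmetric]) (auto simp: finEd Ed_def)
    define L1 where "L1 = {k \<in> K 1 1. \<exists>e\<in>Ed 1 1. e \<in> set (P k)}"
    define L2 where "L2 = {k \<in> K 2 2. \<exists>e\<in>Ed 2 2. e \<in> set (P k)}"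
    define X1 where "X1 = K 1 1 - L1"
    define X2 where "X2 = K 2 2 - L2"
    have finK: "finite (K u v)" for u v unfolding K_def by simp
    have Ksub: "K u v \<subseteq> {..<m}" for u v unfolding K_def by auto
    have inN: "e < N" if "k < m" "e \<in> set (P k)" for k e
      using pth[OF that(1)] that(2) unfolding is_path_def N_def by auto
    have s11: "(\<Sum>k\<in>K 1 1. w k) = (\<Sum>k\<in>L1. w k) + (\<Sum>k\<in>X1. w k)"
    proof -
      have "L1 \<subseteq> K 1 1" unfolding L1_def by auto
      from sum.subset_diff[OF this finK, of w] show ?thesis unfolding X1_def by simp
    qed
    have s22: "(\<Sum>k\<in>K 2 2. w k) = (\<Sum>k\<in>L2. w k) + (\<Sum>k\<in>X2. w k)"
    proof -
      have "L2 \<subseteq> K 2 2" unfolding L2_def by auto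
      from sum.subset_diff[OF this finK, of w] show ?thesis unfolding X2_def by simp
    qed
    have bL1: "(\<Sum>k\<in>L1. w k) \<le> (\<Sum>e\<in>Ed 1 1. load e)"
      unfolding load_def by (rule double_count[OF finEd nn]) (use Ksub L1_def in auto)
    have bL2: "(\<Sum>k\<in>L2. w k) \<le> (\<Sum>e\<in>Ed 2 2. load e)"
      unfolding load_def by (rule double_count[OF finEd nn]) (use Ksub L2_def in auto)
    have meet12: "\<exists>e\<in>Ed 1 2. e \<in> set (P k)" if kin: "k \<in> K 1 2 \<union> X1 \<union> X2" for k
    proof -
      have km: "k < m" using that Ksub X1_def X2_def by auto
      have p: "is_path arcs (P k)" using pth[OF km] .
      have ne: "P k \<noteq> []" using p unfolding is_path_def by simp
      have hdN: "hd (P k) < N" using inN[OF km] ne by simp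
      have lN: "last (P k) < N" using inN[OF km] ne by simp
      have "\<exists>e\<in>set (P k). arcs ! e = (1,2)"
      proof -
        consider "k \<in> K 1 2" | "k \<in> X1" | "k \<in> X2" using kin by blast
        then show ?thesis
        proof cases
          case 1
          then show ?thesis using cross12[OF mg p] unfolding K_def path_src_def path_tgt_def by auto
        next
          case 2
          hence "fst (arcs ! hd (P k)) = 1" "\<not> (\<exists>e\<in>Ed 1 1. e \<in> set (P k))"
            unfolding X1_def L1_def K_def path_src_def by auto
          moreover have "hd (P k) \<in> set (P k)" using ne by simp
          ultimately have "arcs ! hd (P k) = (1,2)"
            using av[OF hdN] hdN unfolding Ed_def by (auto simp: prod_eq_iff)
          then show ?thesis using \<open>hd (P k) \<in> set (P k)\<close> by blast
        next
          case 3
          hence "snd (arcs ! last (P k)) = 2" "\<not> (\<exists>e\<in>Ed 2 2. e \<in> set (P k))"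
            unfolding X2_def L2_def K_def path_tgt_def by auto
          moreover have "last (P k) \<in> set (P k)" using ne by simp
          ultimately have "arcs ! last (P k) = (1,2)"
            using av[OF lN] lN unfolding Ed_def by (auto simp: prod_eq_iff)
          then show ?thesis using \<open>last (P k) \<in> set (P k)\<close> by blast
        qed
      qed
      then show ?thesis using inN[OF km] unfolding Ed_def by blast
    qed
    have b12: "(\<Sum>k\<in>K 1 2 \<union> X1 \<union> X2. w k) \<le> (\<Sum>e\<in>Ed 1 2. load e)"
      unfolding load_def by (rule double_count[OF finEd nn]) (use Ksub X1_def X2_def meet12 in auto)
    have d1: "K 1 2 \<inter> X1 = {}" "(K 1 2 \<union> X1) \<inter> X2 = {}"
      unfolding X1_def X2_def K_def by auto
    have finX: "finite X1" "finite X2" unfolding X1_def X2_def using finK by auto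
    have sU: "(\<Sum>k\<in>K 1 2 \<union> X1 \<union> X2. w k) = (\<Sum>k\<in>K 1 2. w k) + (\<Sum>k\<in>X1. w k) + (\<Sum>k\<in>X2. w k)"
      using d1 finX finK by (simp add: sum.union_disjoint)
    have X1nn: "(\<Sum>k\<in>X1. w k) \<ge> 0" "(\<Sum>k\<in>X2. w k) \<ge> 0"
      using nn Ksub unfolding X1_def X2_def by (auto intro!: sum_nonneg)
    have e11: "(\<Sum>k\<in>K 1 1. w k) = \<kappa> * (3/5)" using dem[of 1 1] M_def by simp
    have e22: "(\<Sum>k\<in>K 2 2. w k) = \<kappa> * (3/5)" using dem[of 2 2] M_def by simp
    have e12: "(\<Sum>k\<in>K 1 2. w k) = \<kappa> * (2/5)" using dem[of 1 2] M_def by simp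
    have ca: "real (card (Ed 1 1)) + real (card (Ed 1 2)) = 3" using c1 by linarith
    have cb: "real (card (Ed 2 2)) + real (card (Ed 1 2)) = 3" using c2 by linarith
    note cap11 = cap[of 1 1] and cap22 = cap[of 2 2] and cap12 = cap[of 1 2]
    define c where "c = real (card (Ed 1 2))"
    have i1: "\<kappa> * (2/5) + (\<Sum>k\<in>X1. w k) + (\<Sum>k\<in>X2. w k) \<le> c / 3"
      using b12 sU e12 cap12 unfolding c_def by linarith
    have i2: "(\<Sum>k\<in>L1. w k) \<le> (3 - c) / 3" using bL1 cap11 ca unfolding c_def by (simp add: field_simps)
    have i3: "(\<Sum>k\<in>L2. w k) \<le> (3 - c) / 3" using bL2 cap22 cb unfolding c_def by (simp add: field_simps)
    have i0: "sum w L1 + sum w X1 + sum w L2 + sum w X2 = \<kappa> * (6/5)" using s11 s22 e11 e22 by linarith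
    have i4: "\<kappa> * (8/5) \<le> (6 - c) / 3" proof -
      have "sum w L1 + sum w L2 \<le> (6 - 2*c)/3" using i2 i3 by (simp add: field_simps)
      then show ?thesis using i0 i1 by (simp add: field_simps)
    qed
    have i5: "\<kappa> * (2/5) \<le> c / 3" using i1 X1nn by linarith
    show False
    proof (cases "card (Ed 1 2) \<le> 1")
      case True
      hence "c \<le> 1" using c_def by simp
      then show False using i5 assms by (simp add: field_simps)
    next
      case False
      hence "c \<ge> 2" using c_def by simp
      then show False using i4 assms by (simp add: field_simps)
    qed
  qed
  show ?thesis using ds no by blast
qed

end
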